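(* Let $\mathcal R_1\subseteq\mathcal R$ be a finite collection with the property: whenever $R,R'\in\mathcal R_1$ are distinct, $R\cap R'\ne\emptyset$ and $L(R)\le L(R')$, then $\mathrm{slope}(R)\not\supseteq\mathrm{slope}(R')$. Then for every $x\in[0,1)$ and every $y\in\mathbb R$, $$\#\{R\in\mathcal R_1:(x,y)\in R\}\ \le\ g(x)\ \le\ \frac1\delta\,h(x).$$
   Context: Dyadic model. Fix $0<\delta\le1$ and $w=2^{-m}$ for an integer $m\ge1$. All dyadic intervals are half-open. For $k\ge0$, $S_k$ is the set of dyadic subintervals of $[0,1)$ of length $2^{-k}$ (slopes); $c_s$ is the center of $s$. Let $u:[0,1)\to S_m$ be measurable. Let $\mathcal D$ be the dyadic intervals $I\subseteq[0,1)$ with $|I|\ge w$, $k(I)=\log_2(|I|/w)$, $\mathrm{Pop}_I(s)=\frac1{|I|}|\{x\in I:u(x)\subseteq s\}|$, $S(I)=\{s\in S_{k(I)}:\mathrm{Pop}_I(s)\ge\delta\}$. The parallelogram $P(I,s,b)=\{(x,y):x\in I,\ b\le y-c_sx<b+w\}$ ($I\in\mathcal D$, $s\in S_{k(I)}$, $b\in\mathbb R$) has $\mathrm{int}(P)=I$, $\mathrm{slope}(P)=s$, $L(P)=|I|$; $\mathcal R$ is the collection of these with $s\in S(I)$. Define $T(I)$ for $I\in\mathcal D$ recursively from larger to smaller intervals: $T([0,1))=S([0,1))$, and $T(I)=\{s\in S(I):$ there is no $K\in\mathcal D$ with $K\supsetneq I$ and $s'\in T(K)$ with $s\supseteq s'\}$.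 For $s\in T(I)$ let $\mu_I^s=|\{x\in I:u(x)\subseteq s\}|$, and let $\mu_I=\sum_{s\in T(I)}\mu_I^s$. Define $g(x)=\sum_{I\in\mathcal D}\chi_I(x)\,\#T(I)$ and $h(x)=\sum_{I\in\mathcal D}\chi_I(x)\frac{\mu_I}{|I|}$. *)

theory Defs
  imports "HOL-Analysis.Analysis"
begin

definition wid :: "nat \<Rightarrow> real" where
  "wid m = 1 / 2 ^ m"

definition dyadic :: "nat \<Rightarrow> nat \<Rightarrow> real set" where
  "dyadic k j = {real j / 2 ^ k ..< (real j + 1) / 2 ^ k}"

definition Sl :: "nat \<Rightarrow> real set set" where
  "Sl k = {dyadic k j | j. j < 2 ^ k}"

definition center :: "real set \<Rightarrow> real" where
  "center s = (Inf s + Sup s) / 2"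

definition len :: "real set \<Rightarrow> real" where
  "len I = measure lebesgue I"

definition Dset :: "nat \<Rightarrow> real set set" where
  "Dset m = {I. \<exists>k j. j < 2 ^ k \<and> I = dyadic k j \<and> len I \<ge> wid m}"

definition kI :: "nat \<Rightarrow> real set \<Rightarrow> nat" where
  "kI m I = nat \<lfloor>log 2 (len I / wid m)\<rfloor>"

definition Pop :: "(real \<Rightarrow> real set) \<Rightarrow> real set \<Rightarrow> real set \<Rightarrow> real" where
  "Pop u I s = measure lebesgue {x \<in> I. u x \<subseteq> s} / len I"

definition Sset :: "nat \<Rightarrow> real \<Rightarrow> (real \<Rightarrow> real set) \<Rightarrow> real set \<Rightarrow> real set set" where
  "Sset m \<delta> u I = {s \<in> Sl (kI m I). Pop u I s \<ge> \<delta>}"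

text \<open>Parallelograms are represented by their parameters (I, s, b); the point set is para.\<close>
definition para :: "nat \<Rightarrow> real set \<times> real set \<times> real \<Rightarrow> (real \<times> real) set" where
  "para m P = (case P of (I, s, b) \<Rightarrow>
     {(x, y). x \<in> I \<and> b \<le> y - center s * x \<and> y - center s * x < b + wid m})"

definition intv :: "real set \<times> real set \<times> real \<Rightarrow> real set" where
  "intv P = fst P"

definition slope :: "real set \<times> real set \<times> real \<Rightarrow> real set" where
  "slope P = fst (snd P)"

definition Lp :: "real set \<times> real set \<times> real \<Rightarrow> real" where
  "Lp P = len (intv P)"

definition Rset :: "nat \<Rightarrow> real \<Rightarrow> (real \<Rightarrow> real set) \<Rightarrow> (real set \<times> real set \<times> real) set" where
  "Rset m \<delta> u = {(I, s, b). I \<in> Dset m \<and> s \<in> Sset m \<delta> u I}"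

text \<open>T(I), defined recursively from larger to smaller intervals.
  TT n I agrees with T(I) for all I in D with |I| >= 2^-n; T(I) = TT m I.\<close>
fun TT :: "nat \<Rightarrow> real \<Rightarrow> (real \<Rightarrow> real set) \<Rightarrow> nat \<Rightarrow> real set \<Rightarrow> real set set" where
  "TT m \<delta> u 0 I = Sset m \<delta> u I"
| "TT m \<delta> u (Suc n) I =
     (if len I \<ge> 1 / 2 ^ n then TT m \<delta> u n I
      else {s \<in> Sset m \<delta> u I. \<not> (\<exists>K \<in> Dset m. I \<subset> K \<and> (\<exists>s' \<in> TT m \<delta> u n K. s' \<subseteq> s))})"

definition Tset :: "nat \<Rightarrow> real \<Rightarrow> (real \<Rightarrow> real set) \<Rightarrow> real set \<Rightarrow> real set set" where
  "Tset m \<delta> u I = TT m \<delta> u m I"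

definition mu :: "nat \<Rightarrow> real \<Rightarrow> (real \<Rightarrow> real set) \<Rightarrow> real set \<Rightarrow> real" where
  "mu m \<delta> u I = (\<Sum>s \<in> Tset m \<delta> u I. measure lebesgue {x \<in> I. u x \<subseteq> s})"

definition gfun :: "nat \<Rightarrow> real \<Rightarrow> (real \<Rightarrow> real set) \<Rightarrow> real \<Rightarrow> real" where
  "gfun m \<delta> u x = (\<Sum>I \<in> Dset m. indicator I x * real (card (Tset m \<delta> u I)))"

definition hfun :: "nat \<Rightarrow> real \<Rightarrow> (real \<Rightarrow> real set) \<Rightarrow> real \<Rightarrow> real" where
  "hfun m \<delta> u x = (\<Sum>I \<in> Dset m. indicator I x * (mu m \<delta> u I / len I))"

end

theory Submission imports Defs begin

lemma len_dy: "len (dyadic k j) = 1 / 2^k"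
  unfolding len_def dyadic_def by (simp add: divide_simps)

lemma dy_ne: "dyadic k j \<noteq> {}"
proof -
  have "real j / 2^k \<in> dyadic k j" unfolding dyadic_def by (simp add: divide_strict_right_mono)
  thus ?thesis by blast
qed

lemma pow_le_iff: "((1::real) / 2^a \<le> 1 / 2^b) \<longleftrightarrow> b \<le> a"
  by (simp add: divide_simps)

lemma dy_nest:
  assumes "k \<le> k'" "dyadic k j \<inter> dyadic k' j' \<noteq> {}"
  shows "dyadic k' j' \<subseteq> dyadic k j"
proof -
  obtain z where z: "z \<in> dyadic k j" "z \<in> dyadic k' j'" using assms(2) by blast
  define d where "d = k' - k"
  have kk: "(2::real)^k' = 2^k * 2^d" using assms(1) unfolding d_def
    by (simp add: power_add[symmetric])
  have p: "(0::real) < 2^k" "(0::real) < 2^d" by auto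
  from z have a1: "real j / 2^k < (real j' + 1) / 2^k'" and a2: "real j' / 2^k' < (real j + 1) / 2^k"
    unfolding dyadic_def by auto
  from a1 have "real j * 2^d < real j' + 1" unfolding kk using p by (simp add: field_simps)
  hence "real (j * 2^d) < real (j' + 1)" by simp
  hence b1: "j * 2^d < j' + 1" by (simp only: of_nat_less_iff)
  from a2 have "real j' < (real j + 1) * 2^d" unfolding kk using p by (simp add: field_simps)
  hence "real j' < real ((j + 1) * 2^d)" by (simp add: algebra_simps)
  hence b2: "j' < (j + 1) * 2^d" by (simp only: of_nat_less_iff)
  have "real (j * 2^d) \<le> real j'" using b1 by (simp only: of_nat_le_iff)
  hence c1: "real j * 2^d \<le> real j'" by simp
  have "real (j' + 1) \<le> real ((j + 1) * 2^d)" using b2 by (simp only: of_nat_le_iff)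
  hence c2: "real j' + 1 \<le> (real j + 1) * 2^d" by (simp add: algebra_simps)
  have e1: "real j / 2^k \<le> real j' / 2^k'" unfolding kk using c1 p by (simp add: field_simps)
  have e2': "(real j' + 1) / (2^k * 2^d) \<le> (real j + 1) * 2^d / (2^k * 2^d)"
    using c2 p by (intro divide_right_mono) auto
  have e2: "(real j' + 1) / 2^k' \<le> (real j + 1) / 2^k" unfolding kk using e2' p by simp
  show ?thesis unfolding dyadic_def using e1 e2 by auto
qed

lemma dy_sub_level: "dyadic k j \<subseteq> dyadic k' j' \<Longrightarrow> k' \<le> k"
proof (rule ccontr)
  assume s: "dyadic k j \<subseteq> dyadic k' j'" and "\<not> k' \<le> k"
  hence "k \<le> k'" by simp
  moreover have "dyadic k j \<inter> dyadic k' j' \<noteq> {}" using s dy_ne by blast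
  ultimately have "dyadic k' j' \<subseteq> dyadic k j" by (rule dy_nest)
  with s have "dyadic k j = dyadic k' j'" by blast
  hence "len (dyadic k j) = len (dyadic k' j')" by simp
  hence "(1::real)/2^k = 1/2^k'" by (simp add: len_dy)
  hence "k = k'" by (metis order_antisym pow_le_iff order_refl)
  with \<open>\<not> k' \<le> k\<close> show False by simp
qed

lemma dy_sub_eq: "dyadic k j \<subseteq> dyadic k j' \<Longrightarrow> j = j'"
proof -
  assume s: "dyadic k j \<subseteq> dyadic k j'"
  have "real j / 2^k \<in> dyadic k j" unfolding dyadic_def by (simp add: divide_strict_right_mono)
  hence "real j / 2^k \<in> dyadic k j'" using s by blast
  hence "real j' \<le> real j" "real j < real j' + 1" unfolding dyadic_def by (auto simp: divide_simps)
  thus "j = j'" by linarith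
qed

lemma Dset_iff: "I \<in> Dset m \<longleftrightarrow> (\<exists>k j. k \<le> m \<and> j < 2^k \<and> I = dyadic k j)"
  unfolding Dset_def wid_def apply (auto simp: len_dy pow_le_iff) by blast

lemma Dset_finite: "finite (Dset m)"
proof -
  have "Dset m \<subseteq> (\<lambda>(k,j). dyadic k j) ` ({..m} \<times> {..<2^m})"
  proof
    fix I assume "I \<in> Dset m"
    then obtain k j where "k \<le> m" "j < 2^k" "I = dyadic k j" by (auto simp: Dset_iff)
    moreover have "(2::nat)^k \<le> 2^m" using \<open>k \<le> m\<close> by (simp add: power_increasing)
    moreover have "j < 2^m" using \<open>j < 2^k\<close> \<open>(2::nat)^k \<le> 2^m\<close> by linarith
    ultimately show "I \<in> (\<lambda>(k,j). dyadic k j) ` ({..m} \<times> {..<2^m})"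
      by (auto intro!: image_eqI[where x="(k,j)"] dest: order.strict_trans2)
  qed
  thus ?thesis by (rule finite_subset) auto
qed

lemma kI_dy: "k \<le> m \<Longrightarrow> kI m (dyadic k j) = m - k"
proof -
  assume "k \<le> m"
  have "len (dyadic k j) / wid m = 2^(m-k)"
    using \<open>k \<le> m\<close> by (simp add: len_dy wid_def power_diff)
  thus ?thesis unfolding kI_def by simp
qed

lemma Sl_finite: "finite (Sl k)"
proof -
  have "Sl k = dyadic k ` {..<2^k}" unfolding Sl_def by auto
  thus ?thesis by simp
qed

lemma Sl_ne: "s \<in> Sl k \<Longrightarrow> s \<noteq> {}"
  unfolding Sl_def using dy_ne by auto

lemma TT_sub: "TT m \<delta> u n I \<subseteq> Sset m \<delta> u I"
  by (induction n) auto


lemma key: "\<forall>I\<in>Dset m. 1/2^n \<le> len I \<longrightarrow>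
   (\<forall>s\<in>Sset m \<delta> u I. \<exists>K\<in>Dset m. I \<subseteq> K \<and> (\<exists>t\<in>TT m \<delta> u n K. t \<subseteq> s))"
proof (induction n)
  case 0
  show ?case by auto
next
  case (Suc n)
  have lift: "\<And>K. 1/2^n \<le> len K \<Longrightarrow> TT m \<delta> u (Suc n) K = TT m \<delta> u n K" by simp
  show ?case
  proof (intro ballI impI)
    fix I s assume I: "I \<in> Dset m" "1/2^Suc n \<le> len I" and s: "s \<in> Sset m \<delta> u I"
    obtain a b where ab: "a \<le> m" "b < 2^a" "I = dyadic a b" using I(1) by (auto simp: Dset_iff)
    have "(1::real)/2^Suc n \<le> 1/2^a" using I(2) ab(3) by (simp only: len_dy)
    hence aS: "a \<le> Suc n" by (simp only: pow_le_iff)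
    show "\<exists>K\<in>Dset m. I \<subseteq> K \<and> (\<exists>t\<in>TT m \<delta> u (Suc n) K. t \<subseteq> s)"
    proof (cases "1/2^n \<le> len I")
      case True
      then obtain K t where K: "K \<in> Dset m" "I \<subseteq> K" "t \<in> TT m \<delta> u n K" "t \<subseteq> s"
        using Suc.IH I(1) s by blast
      obtain c d where cd: "c \<le> m" "d < 2^c" "K = dyadic c d" using K(1) by (auto simp: Dset_iff)
      have "c \<le> a" using K(2) ab(3) cd(3) dy_sub_level by blast
      hence "len I \<le> len K" using ab(3) cd(3) by (simp add: len_dy pow_le_iff)
      hence "1/2^n \<le> len K" using True by linarith
      thus ?thesis using K lift by auto
    next
      case False
      show ?thesis
      proof (cases "s \<in> TT m \<delta> u (Suc n) I")
        case True
        thus ?thesis using I(1) by blast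
      next
        case False2: False
        from False False2 s obtain K s' where K: "K \<in> Dset m" "I \<subset> K" "s' \<in> TT m \<delta> u n K" "s' \<subseteq> s"
          by auto
        obtain c d where cd: "c \<le> m" "d < 2^c" "K = dyadic c d" using K(1) by (auto simp: Dset_iff)
        have "c \<le> a" using K(2) ab(3) cd(3) dy_sub_level by blast
        moreover have "c \<noteq> a"
        proof
          assume "c = a"
          hence "b = d" using K(2) ab(3) cd(3) dy_sub_eq by blast
          thus False using K(2) ab(3) cd(3) \<open>c = a\<close> by simp
        qed
        ultimately have "c \<le> n" using aS by linarith
        hence "1/2^n \<le> len K" using cd(3) by (simp add: len_dy pow_le_iff)
        thus ?thesis using K lift by auto
      qed
    qed
  qed
qed


theorem lemma4:
  fixes m :: nat and \<delta> :: real and u :: "real \<Rightarrow> real set"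
    and R1 :: "(real set \<times> real set \<times> real) set"
  assumes "m \<ge> 1" and "0 < \<delta>" and "\<delta> \<le> 1"
    and "\<forall>x \<in> {0..<1}. u x \<in> Sl m"
    and "\<forall>s \<in> Sl m. {x \<in> {0..<1}. u x = s} \<in> sets lebesgue"
    and "finite R1" and "R1 \<subseteq> Rset m \<delta> u"
    and "\<forall>R \<in> R1. \<forall>R' \<in> R1. R \<noteq> R' \<and> para m R \<inter> para m R' \<noteq> {} \<and> Lp R \<le> Lp R'
           \<longrightarrow> \<not> (slope R' \<subseteq> slope R)"
    and "x \<in> {0..<1}"
  shows "real (card {R \<in> R1. (x, y) \<in> para m R}) \<le> gfun m \<delta> u x
         \<and> gfun m \<delta> u x \<le> hfun m \<delta> u x / \<delta>"
proof
  let ?T = "Tset m \<delta> u"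
  have Tsub: "\<And>I. ?T I \<subseteq> Sset m \<delta> u I" unfolding Tset_def by (rule TT_sub)
  have Tfin: "\<And>I. finite (?T I)"
  proof -
    fix I
    have "?T I \<subseteq> Sl (kI m I)" using Tsub unfolding Sset_def by blast
    thus "finite (?T I)" using Sl_finite finite_subset by blast
  qed
  have lenpos: "\<And>I. I \<in> Dset m \<Longrightarrow> 0 < len I" by (auto simp: Dset_iff len_dy)
  show "gfun m \<delta> u x \<le> hfun m \<delta> u x / \<delta>"
    unfolding gfun_def hfun_def sum_divide_distrib
  proof (rule sum_mono)
    fix I assume I: "I \<in> Dset m"
    have "mu m \<delta> u I / len I = (\<Sum>s\<in>?T I. measure lebesgue {x \<in> I. u x \<subseteq> s} / len I)"
      unfolding mu_def sum_divide_distrib ..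
    also have "\<dots> \<ge> (\<Sum>s\<in>?T I. \<delta>)"
    proof (rule sum_mono)
      fix s assume "s \<in> ?T I"
      hence "s \<in> Sset m \<delta> u I" using Tsub by blast
      thus "\<delta> \<le> measure lebesgue {x \<in> I. u x \<subseteq> s} / len I" unfolding Sset_def Pop_def by simp
    qed
    finally have "real (card (?T I)) * \<delta> \<le> mu m \<delta> u I / len I" by simp
    hence c: "real (card (?T I)) \<le> mu m \<delta> u I / len I / \<delta>" using pos_le_divide_eq[OF assms(2)] by blast
    show "indicator I x * real (card (?T I)) \<le> indicator I x * (mu m \<delta> u I / len I) / \<delta>"
      using c by (cases "x \<in> I") auto
  qed
next
  let ?T = "Tset m \<delta> u"
  have Tsub: "\<And>I. ?T I \<subseteq> Sset m \<delta> u I" unfolding Tset_def by (rule TT_sub)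
  have Tfin: "\<And>I. finite (?T I)"
  proof -
    fix I
    have "?T I \<subseteq> Sl (kI m I)" using Tsub unfolding Sset_def by blast
    thus "finite (?T I)" using Sl_finite finite_subset by blast
  qed
  define A where "A = {R \<in> R1. (x, y) \<in> para m R}"
  define B where "B = Sigma {I \<in> Dset m. x \<in> I} ?T"
  define P where "P R p \<longleftrightarrow> fst p \<in> Dset m \<and> intv R \<subseteq> fst p \<and> snd p \<in> ?T (fst p) \<and> snd p \<subseteq> slope R"
    for R p
  define F where "F R = (SOME p. P R p)" for R
  have FP: "P R (F R)" if "R \<in> R1" for R
  proof -
    obtain I s b where R: "R = (I, s, b)" by (cases R) auto
    have Is: "I \<in> Dset m" "s \<in> Sset m \<delta> u I" using that assms(7) R unfolding Rset_def by auto
    have "1/2^m \<le> len I" using Is(1) unfolding Dset_def wid_def by auto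
    then obtain K t where "K \<in> Dset m" "I \<subseteq> K" "t \<in> TT m \<delta> u m K" "t \<subseteq> s"
      using key[of m m \<delta> u] Is by blast
    hence "P R (K, t)" unfolding P_def R intv_def slope_def Tset_def by simp
    thus ?thesis unfolding F_def by (rule someI)
  qed
  have FB: "F ` A \<subseteq> B"
  proof
    fix p assume "p \<in> F ` A"
    then obtain R where R: "R \<in> A" "p = F R" by blast
    obtain I s b where Rd: "R = (I, s, b)" by (cases R) auto
    have "x \<in> intv R" using R(1) unfolding A_def Rd para_def intv_def by auto
    thus "p \<in> B" using FP[of R] R(1) unfolding A_def B_def P_def R(2) by (cases "F R") auto
  qed
  have k: "R = R'" if RR: "R \<in> A" "R' \<in> A" "Lp R \<le> Lp R'" "F R = F R'" for R R'
  proof (rule ccontr)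
    assume ne: "R \<noteq> R'"
    obtain I s b where Rd: "R = (I, s, b)" by (cases R) auto
    obtain I' s' b' where Rd': "R' = (I', s', b')" by (cases R') auto
    have RR1: "R \<in> R1" "R' \<in> R1" using RR unfolding A_def by auto
    have Is: "I \<in> Dset m" "s \<in> Sset m \<delta> u I" using RR1 assms(7) Rd unfolding Rset_def by auto
    have Is': "I' \<in> Dset m" "s' \<in> Sset m \<delta> u I'" using RR1 assms(7) Rd' unfolding Rset_def by auto
    obtain a j where aj: "a \<le> m" "j < 2^a" "I = dyadic a j" using Is(1) by (auto simp: Dset_iff)
    obtain a' j' where aj': "a' \<le> m" "j' < 2^a'" "I' = dyadic a' j'" using Is'(1) by (auto simp: Dset_iff)
    have "s \<in> Sl (m - a)" using Is(2) aj kI_dy unfolding Sset_def by auto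
    then obtain p where p: "s = dyadic (m - a) p" unfolding Sl_def by auto
    have "s' \<in> Sl (m - a')" using Is'(2) aj' kI_dy unfolding Sset_def by auto
    then obtain p' where p': "s' = dyadic (m - a') p'" unfolding Sl_def by auto
    have "(1::real)/2^a \<le> 1/2^a'" using RR(3) unfolding Rd Rd' Lp_def intv_def aj(3) aj'(3)
      by (simp only: fst_conv len_dy)
    hence "a' \<le> a" by (simp only: pow_le_iff)
    hence le: "m - a \<le> m - a'" by simp
    obtain K t where Kt: "F R = (K, t)" by (cases "F R") auto
    have PR: "P R (K, t)" using FP[OF RR1(1)] Kt by simp
    have PR': "P R' (K, t)" using FP[OF RR1(2)] Kt RR(4) by simp
    have "t \<noteq> {}"
    proof -
      have "t \<in> Sset m \<delta> u K" using PR Tsub unfolding P_def by auto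
      thus ?thesis unfolding Sset_def using Sl_ne by auto
    qed
    moreover have "t \<subseteq> s" "t \<subseteq> s'" using PR PR' unfolding P_def Rd Rd' slope_def by auto
    ultimately have "dyadic (m - a) p \<inter> dyadic (m - a') p' \<noteq> {}" using p p' by blast
    hence sub: "s' \<subseteq> s" using dy_nest[OF le] p p' by blast
    have "(x, y) \<in> para m R \<inter> para m R'" using RR unfolding A_def by auto
    hence "para m R \<inter> para m R' \<noteq> {}" by blast
    hence "\<not> (slope R' \<subseteq> slope R)" using assms(8) RR1 ne RR(3) by blast
    thus False using sub unfolding Rd Rd' slope_def by simp
  qed
  have inj: "inj_on F A"
  proof (rule inj_onI)
    fix R R' assume "R \<in> A" "R' \<in> A" "F R = F R'"
    thus "R = R'" using k[of R R'] k[of R' R] by (cases "Lp R \<le> Lp R'") auto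
  qed
  have finD: "finite {I \<in> Dset m. x \<in> I}" using Dset_finite by simp
  have finB: "finite B" unfolding B_def using finD Tfin by simp
  have "card A \<le> card B" using card_inj_on_le[OF inj FB finB] .
  also have "card B = (\<Sum>I\<in>{I \<in> Dset m. x \<in> I}. card (?T I))" unfolding B_def
    using finD Tfin by simp
  finally have "real (card A) \<le> real (\<Sum>I\<in>{I \<in> Dset m. x \<in> I}. card (?T I))" by linarith
  also have "\<dots> = (\<Sum>I\<in>{I \<in> Dset m. x \<in> I}. real (card (?T I)))" by simp
  also have "\<dots> = (\<Sum>I\<in>Dset m. if x \<in> I then real (card (?T I)) else 0)"
    by (rule sum.inter_filter[OF Dset_finite])
  also have "\<dots> = gfun m \<delta> u x" unfolding gfun_def by (rule sum.cong) (auto simp: indicator_def)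
  finally show "real (card {R \<in> R1. (x, y) \<in> para m R}) \<le> gfun m \<delta> u x" unfolding A_def .
qed

end
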